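(* Let $A\in\mathcal{C}_n$ and let $w\in\mathbb{R}^n$ be nonzero. Then $A$ is irreducible with respect to $ww^T$ if and only if there exists a minimal zero $u$ of $A$ with $w^Tu\ne0$.
   Context: $\mathcal{C}_n$ denotes the cone of copositive matrices: real symmetric $n\times n$ matrices $A$ with $x^TAx\ge 0$ for all $x\in\mathbb{R}^n_+$. For a nonzero matrix $M$, $A$ is irreducible with respect to $M$ if there does not exist $\gamma>0$ with $A-\gamma M\in\mathcal{C}_n$. A zero of $A$ is a nonzero $u\in\mathbb{R}^n_+$ with $u^TAu=0$; $\operatorname{Supp}(u)=\{i:u_i\ne0\}$; a zero $u$ is minimal if there is no zero $v$ with $\operatorname{Supp}(v)\subsetneq\operatorname{Supp}(u)$. *)

theory Defs
  imports "HOL-Analysis.Analysis"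
begin

definition nonneg_vec :: "real ^ 'n \<Rightarrow> bool" where
  "nonneg_vec x \<longleftrightarrow> (\<forall>i. 0 \<le> x $ i)"

definition copositive :: "real ^ 'n ^ 'n \<Rightarrow> bool" where
  "copositive A \<longleftrightarrow> transpose A = A \<and> (\<forall>x. nonneg_vec x \<longrightarrow> 0 \<le> x \<bullet> (A *v x))"

definition irreducible_wrt :: "real ^ 'n ^ 'n \<Rightarrow> real ^ 'n ^ 'n \<Rightarrow> bool" where
  "irreducible_wrt A M \<longleftrightarrow> \<not> (\<exists>\<gamma>>0. copositive (A - \<gamma> *\<^sub>R M))"

definition is_zero :: "real ^ 'n ^ 'n \<Rightarrow> real ^ 'n \<Rightarrow> bool" where
  "is_zero A u \<longleftrightarrow> u \<noteq> 0 \<and> nonneg_vec u \<and> u \<bullet> (A *v u) = 0"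

definition supp :: "real ^ 'n \<Rightarrow> 'n set" where
  "supp u = {i. u $ i \<noteq> 0}"

definition minimal_zero :: "real ^ 'n ^ 'n \<Rightarrow> real ^ 'n \<Rightarrow> bool" where
  "minimal_zero A u \<longleftrightarrow> is_zero A u \<and> \<not> (\<exists>v. is_zero A v \<and> supp v \<subset> supp u)"

definition outer :: "real ^ 'n \<Rightarrow> real ^ 'n \<Rightarrow> real ^ 'n ^ 'n" where
  "outer w v = (\<chi> i j. w $ i * v $ j)"

end

theory Submission
  imports Defs
begin

lemma sym_inner:
  fixes A :: "real ^ 'n ^ 'n"
  assumes "transpose A = A"
  shows "x \<bullet> (A *v y) = y \<bullet> (A *v x)"
proof -
  have "x \<bullet> (A *v y) = (x v* A) \<bullet> y" by (simp add: dot_lmul_matrix)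
  also have "x v* A = A *v x" using vector_transpose_matrix[of x A] assms by simp
  finally show ?thesis by (simp add: inner_commute)
qed

lemma quad_expand:
  fixes A :: "real ^ 'n ^ 'n"
  assumes "transpose A = A"
  shows "(x + t *\<^sub>R z) \<bullet> (A *v (x + t *\<^sub>R z)) =
     x \<bullet> (A *v x) + 2 * t * (z \<bullet> (A *v x)) + t^2 * (z \<bullet> (A *v z))"
  using sym_inner[OF assms, of x z]
  by (simp add: matrix_vector_right_distrib matrix_vector_mult_scaleR inner_add_left
      inner_add_right power2_eq_square algebra_simps)

lemma scalar_lemma:
  fixes c a \<delta> :: real
  assumes "\<delta> > 0" and "\<And>t. 0 < t \<Longrightarrow> t \<le> \<delta> \<Longrightarrow> 0 \<le> 2*t*c + t^2*a"
  shows "0 \<le> c"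
proof (rule ccontr)
  assume "\<not> 0 \<le> c"
  hence c: "c < 0" by simp
  define t where "t = min \<delta> (- c / (\<bar>a\<bar> + 1))"
  have "- c / (\<bar>a\<bar> + 1) > 0" using c by (intro divide_pos_pos) auto
  hence t0: "t > 0" using assms(1) by (simp add: t_def)
  have "t \<le> - c / (\<bar>a\<bar> + 1)" by (simp add: t_def)
  hence "t * (\<bar>a\<bar> + 1) \<le> - c"
  proof -
    have p: "\<bar>a\<bar> + 1 > 0" by (simp add: add_pos_nonneg)
    have "t \<le> (- c) / (\<bar>a\<bar> + 1)" using \<open>t \<le> - c / (\<bar>a\<bar> + 1)\<close> by simp
    thus ?thesis using pos_le_divide_eq[OF p, of t "- c"] by linarith
  qed
  hence ta: "t * \<bar>a\<bar> < - c" using t0 by (simp add: algebra_simps)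
  have "t * a \<le> t * \<bar>a\<bar>" using t0 by (simp add: mult_left_mono)
  hence "2*c + t*a < 0" using ta c by linarith
  hence "t * (2*c + t*a) < 0" using t0 by (simp add: mult_pos_neg)
  moreover have "0 \<le> 2*t*c + t^2*a" using assms(2)[of t] t0 by (simp add: t_def)
  ultimately show False by (simp add: power2_eq_square algebra_simps)
qed

lemma zero_grad_nonneg:
  fixes A :: "real ^ 'n ^ 'n"
  assumes "copositive A" "is_zero A y" "nonneg_vec z"
  shows "0 \<le> z \<bullet> (A *v y)"
proof (rule scalar_lemma[of 1 _ "z \<bullet> (A *v z)"])
  fix t :: real assume t: "0 < t" "t \<le> 1"
  have sym: "transpose A = A" using assms(1) by (simp add: copositive_def)
  have "nonneg_vec (y + t *\<^sub>R z)" using assms(2,3) t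
    by (simp add: nonneg_vec_def is_zero_def)
  hence "0 \<le> (y + t *\<^sub>R z) \<bullet> (A *v (y + t *\<^sub>R z))"
    using assms(1) by (simp add: copositive_def)
  thus "0 \<le> 2 * t * (z \<bullet> (A *v y)) + t\<^sup>2 * (z \<bullet> (A *v z))"
    using quad_expand[OF sym, of y t z] assms(2) by (simp add: is_zero_def)
qed simp

lemma exists_minimal_below:
  fixes A :: "real ^ 'n ^ 'n"
  shows "is_zero A x \<Longrightarrow> \<exists>y. minimal_zero A y \<and> supp y \<subseteq> supp x"
proof (induction "card (supp x)" arbitrary: x rule: less_induct)
  case less
  show ?case
  proof (cases "minimal_zero A x")
    case True thus ?thesis by auto
  next
    case False
    then obtain v where v: "is_zero A v" "supp v \<subset> supp x"
      using less.prems by (auto simp: minimal_zero_def)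
    have "card (supp v) < card (supp x)" using v(2) by (simp add: psubset_card_mono)
    then obtain y where "minimal_zero A y" "supp y \<subseteq> supp v" using less.hyps v(1) by blast
    thus ?thesis using v(2) by (meson order_trans psubset_imp_subset)
  qed
qed


lemma closed_supp_sub: "closed {x::real^'n. \<forall>i. i \<notin> S \<longrightarrow> x $ i = 0}"
proof -
  have "{x::real^'n. \<forall>i. i \<notin> S \<longrightarrow> x $ i = 0} = (\<Inter>i\<in>-S. {x. x $ i = 0})" by auto
  thus ?thesis by (simp add: closed_INT closed_Collect_eq continuous_intros)
qed

lemma main_bound:
  fixes A :: "real ^ 'n ^ 'n" and w :: "real ^ 'n"
  assumes cop: "copositive A" and orth: "\<And>u. minimal_zero A u \<Longrightarrow> w \<bullet> u = 0"
  shows "finite S \<Longrightarrow> \<exists>\<gamma>>0. \<forall>x. nonneg_vec x \<and> supp x \<subseteq> S \<longrightarrow> \<gamma> * (w \<bullet> x)^2 \<le> x \<bullet> (A *v x)"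
proof (induction S rule: finite_psubset_induct)
  case (psubset S)
  have sym: "transpose A = A" using cop by (simp add: copositive_def)
  define f where "f x = x \<bullet> (A *v x)" for x
  define K where "K = {x. nonneg_vec x \<and> supp x \<subseteq> S \<and> norm x = 1}"
  have scale: "f (c *\<^sub>R x) = c^2 * f x" for x c
    by (simp add: f_def matrix_vector_mult_scaleR power2_eq_square)
  have nn: "0 \<le> f x" if "nonneg_vec x" for x
    using cop that by (simp add: copositive_def f_def)
  have inK: "(1/norm x) *\<^sub>R x \<in> K" if "nonneg_vec x" "supp x \<subseteq> S" "x \<noteq> 0" for x
    using that by (auto simp: K_def nonneg_vec_def supp_def)
  have Kcomp: "compact K"
  proof -
    have "K = {x. \<forall>i. 0 \<le> x $ i} \<inter> {x. \<forall>i. i \<notin> S \<longrightarrow> x $ i = 0} \<inter> sphere 0 1"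
      by (auto simp: K_def nonneg_vec_def supp_def)
    moreover have "closed {x::real^'n. \<forall>i. 0 \<le> x $ i}"
      by (intro closed_Collect_all closed_Collect_le continuous_intros)
    ultimately have "closed K" using closed_supp_sub[of S] by (simp add: closed_Int)
    moreover have "bounded K" unfolding K_def
      by (rule bounded_subset[OF bounded_cball[of 0 1]]) auto
    ultimately show ?thesis by (simp add: compact_eq_bounded_closed)
  qed
  have fcont: "continuous_on K f" unfolding f_def by (intro continuous_intros)
  show ?case
  proof (cases "K = {}")
    case True
    show ?thesis
    proof (intro exI[of _ 1] conjI allI impI)
      fix x assume x: "nonneg_vec x \<and> supp x \<subseteq> S"
      have "x = 0" using inK x True by blast
      thus "1 * (w \<bullet> x)^2 \<le> x \<bullet> (A *v x)" by simp
    qed simp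
  next
    case False
    obtain x0 where x0: "x0 \<in> K" "\<forall>y\<in>K. f x0 \<le> f y"
      using continuous_attains_inf[OF Kcomp False fcont] by blast
    have x0p: "nonneg_vec x0" "supp x0 \<subseteq> S" "norm x0 = 1" using x0(1) by (auto simp: K_def)
    show ?thesis
    proof (cases "f x0 > 0")
      case True
      define \<gamma> where "\<gamma> = f x0 / ((norm w)^2 + 1)"
      have den: "(norm w)^2 + 1 > 0" by (simp add: add_nonneg_pos)
      show ?thesis
      proof (intro exI[of _ \<gamma>] conjI allI impI)
        show "\<gamma> > 0" using True den by (simp add: \<gamma>_def)
        fix x assume x: "nonneg_vec x \<and> supp x \<subseteq> S"
        show "\<gamma> * (w \<bullet> x)^2 \<le> x \<bullet> (A *v x)"
        proof (cases "x = 0")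
          case True thus ?thesis by simp
        next
          case False
          let ?x' = "(1/norm x) *\<^sub>R x"
          have nx: "norm x > 0" using False by simp
          have "f x0 \<le> f ?x'" using x0 inK x False by blast
          also have "f ?x' = f x / (norm x)^2" using scale by (simp add: power_divide)
          finally have fx: "f x0 * (norm x)^2 \<le> f x" using nx by (simp add: pos_le_divide_eq)
          have "\<bar>w \<bullet> x\<bar> \<le> norm w * norm x" by (rule Cauchy_Schwarz_ineq2)
          hence cs: "(w \<bullet> x)^2 \<le> (norm w * norm x)^2"
            by (metis abs_ge_zero power2_abs power_mono)
          have g0: "\<gamma> \<ge> 0" using True den by (simp add: \<gamma>_def)
          have gw: "\<gamma> * (norm w)^2 \<le> f x0"
          proof -
            have "\<gamma> * (norm w)^2 = f x0 * ((norm w)^2 / ((norm w)^2 + 1))" by (simp add: \<gamma>_def)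
            also have "\<dots> \<le> f x0 * 1" using True den
              by (intro mult_left_mono) (auto simp: divide_le_eq_1)
            finally show ?thesis by simp
          qed
          have "\<gamma> * (w \<bullet> x)^2 \<le> \<gamma> * (norm w * norm x)^2" using cs g0 by (rule mult_left_mono)
          also have "\<dots> = (\<gamma> * (norm w)^2) * (norm x)^2" by (simp add: power_mult_distrib)
          also have "\<dots> \<le> f x0 * (norm x)^2" using gw by (rule mult_right_mono) simp
          also have "\<dots> \<le> f x" by (rule fx)
          finally show ?thesis by (simp add: f_def)
        qed
      qed
    next
      case False
      hence f0: "f x0 = 0" using nn[OF x0p(1)] by linarith
      have "x0 \<noteq> 0" using x0p(3) by auto
      hence "is_zero A x0" using x0p f0 by (simp add: is_zero_def f_def)
      then obtain y where y: "minimal_zero A y" "supp y \<subseteq> supp x0"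
        using exists_minimal_below by blast
      have yz: "is_zero A y" using y(1) by (simp add: minimal_zero_def)
      have wy: "w \<bullet> y = 0" using orth y(1) .
      define I where "I = supp y"
      have IS: "I \<subseteq> S" using y(2) x0p(2) by (auto simp: I_def)
      have Ifin: "finite I" by simp
      have "y \<noteq> 0" using yz by (simp add: is_zero_def)
      then obtain j where "y $ j \<noteq> 0" by (auto simp: vec_eq_iff)
      hence Ine: "I \<noteq> {}" by (auto simp: I_def supp_def)
      have ypos: "y $ i > 0" if "i \<in> I" for i
        using that yz by (auto simp: I_def supp_def is_zero_def nonneg_vec_def less_le)
      have fy: "f y = 0" using yz by (simp add: is_zero_def f_def)
      have "\<forall>i\<in>I. \<exists>g>0. \<forall>x. nonneg_vec x \<and> supp x \<subseteq> S - {i} \<longrightarrow> g * (w \<bullet> x)^2 \<le> x \<bullet> (A *v x)"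
      proof
        fix i assume "i \<in> I"
        hence "S - {i} \<subset> S" using IS by auto
        thus "\<exists>g>0. \<forall>x. nonneg_vec x \<and> supp x \<subseteq> S - {i} \<longrightarrow> g * (w \<bullet> x)^2 \<le> x \<bullet> (A *v x)"
          by (rule psubset.IH)
      qed
      then obtain g where g: "\<And>i. i \<in> I \<Longrightarrow> g i > 0"
        "\<And>i x. i \<in> I \<Longrightarrow> nonneg_vec x \<Longrightarrow> supp x \<subseteq> S - {i} \<Longrightarrow> g i * (w \<bullet> x)^2 \<le> x \<bullet> (A *v x)"
        by metis
      define \<gamma> where "\<gamma> = Min (g ` I)"
      have gpos: "\<gamma> > 0" using g(1) Ifin Ine by (simp add: \<gamma>_def Min_gr_iff)
      show ?thesis
      proof (intro exI[of _ \<gamma>] conjI allI impI)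
        show "\<gamma> > 0" by (rule gpos)
        fix x assume x: "nonneg_vec x \<and> supp x \<subseteq> S"
        define r where "r i = x $ i / y $ i" for i
        define s where "s = Min (r ` I)"
        have "s \<in> r ` I" unfolding s_def using Ifin Ine by (intro Min_in) auto
        then obtain i0 where i0: "i0 \<in> I" "s = r i0" by blast
        have sle: "s \<le> r i" if "i \<in> I" for i using that Ifin by (simp add: s_def)
        have s0: "0 \<le> s" using i0 ypos[OF i0(1)] x by (simp add: r_def nonneg_vec_def)
        define z where "z = x - s *\<^sub>R y"
        have zn: "nonneg_vec z" unfolding nonneg_vec_def
        proof
          fix i
          show "0 \<le> z $ i"
          proof (cases "i \<in> I")
            case True
            have "s \<le> x $ i / y $ i" using sle[OF True] by (simp add: r_def)
            hence "s * y $ i \<le> x $ i" using ypos[OF True] by (simp add: pos_le_divide_eq)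
            thus ?thesis by (simp add: z_def)
          next
            case False
            hence "y $ i = 0" by (simp add: I_def supp_def)
            thus ?thesis using x by (simp add: z_def nonneg_vec_def)
          qed
        qed
        have zi0: "z $ i0 = 0" using ypos[OF i0(1)] i0(2) by (simp add: z_def r_def)
        have zsupp: "supp z \<subseteq> S - {i0}"
        proof
          fix i assume "i \<in> supp z"
          hence zi: "z $ i \<noteq> 0" by (simp add: supp_def)
          hence "x $ i \<noteq> 0 \<or> y $ i \<noteq> 0" by (auto simp: z_def)
          hence "i \<in> S" using x IS by (auto simp: supp_def I_def)
          moreover have "i \<noteq> i0" using zi zi0 by auto
          ultimately show "i \<in> S - {i0}" by simp
        qed
        have fz: "g i0 * (w \<bullet> z)^2 \<le> f z" using g(2)[OF i0(1) zn zsupp] by (simp add: f_def)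
        have wz: "w \<bullet> z = w \<bullet> x" using wy by (simp add: z_def inner_diff_right)
        have xz: "x = z + s *\<^sub>R y" by (simp add: z_def)
        have "f x = f z + 2 * s * (y \<bullet> (A *v z)) + s^2 * f y"
          using quad_expand[OF sym, of z s y] xz by (simp add: f_def)
        moreover have "y \<bullet> (A *v z) = z \<bullet> (A *v y)" by (rule sym_inner[OF sym])
        moreover have "0 \<le> z \<bullet> (A *v y)" by (rule zero_grad_nonneg[OF cop yz zn])
        ultimately have fzx: "f z \<le> f x" using fy s0 by simp
        have "\<gamma> \<le> g i0" using i0(1) Ifin by (simp add: \<gamma>_def)
        hence "\<gamma> * (w \<bullet> x)^2 \<le> g i0 * (w \<bullet> x)^2" by (simp add: mult_right_mono)
        also have "\<dots> \<le> f x" using fz wz fzx by simp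
        finally show "\<gamma> * (w \<bullet> x)^2 \<le> x \<bullet> (A *v x)" by (simp add: f_def)
      qed
    qed
  qed
qed


lemma outer_mult: "outer w w *v x = (w \<bullet> x) *\<^sub>R w"
  by (simp add: vec_eq_iff outer_def matrix_vector_mult_def inner_vec_def
      sum_distrib_right sum_distrib_left algebra_simps)

lemma scaleR_mat_mult: "((c::real) *\<^sub>R M) *v x = c *\<^sub>R (M *v (x :: real^'n))"
  by (simp add: vec_eq_iff matrix_vector_mult_def sum_distrib_left algebra_simps)

lemma quad_outer:
  "x \<bullet> ((A - c *\<^sub>R outer w w) *v x) = x \<bullet> (A *v x) - c * (w \<bullet> x)^2"
  by (simp add: matrix_vector_mult_diff_rdistrib scaleR_mat_mult outer_mult
      inner_diff_right power2_eq_square inner_commute)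

lemma transpose_outer:
  fixes A :: "real ^ 'n ^ 'n"
  assumes "transpose A = A"
  shows "transpose (A - c *\<^sub>R outer w w) = A - c *\<^sub>R outer w w"
proof -
  have "A $ j $ i = A $ i $ j" for i j
    using arg_cong[OF assms, of "\<lambda>M. M $ i $ j"] by (simp add: transpose_def)
  thus ?thesis by (simp add: vec_eq_iff transpose_def outer_def mult.commute)
qed

theorem corollary4p4:
  fixes A :: "real ^ 'n ^ 'n" and w :: "real ^ 'n"
  assumes "copositive A" and "w \<noteq> 0"
  shows "irreducible_wrt A (outer w w) \<longleftrightarrow> (\<exists>u. minimal_zero A u \<and> w \<bullet> u \<noteq> 0)"
proof
  assume irr: "irreducible_wrt A (outer w w)"
  show "\<exists>u. minimal_zero A u \<and> w \<bullet> u \<noteq> 0"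
  proof (rule ccontr)
    assume "\<not> (\<exists>u. minimal_zero A u \<and> w \<bullet> u \<noteq> 0)"
    hence orth: "\<And>u. minimal_zero A u \<Longrightarrow> w \<bullet> u = 0" by blast
    obtain \<gamma> where g: "\<gamma> > 0"
      "\<forall>x. nonneg_vec x \<and> supp x \<subseteq> UNIV \<longrightarrow> \<gamma> * (w \<bullet> x)^2 \<le> x \<bullet> (A *v x)"
      using main_bound[OF assms(1) orth, of UNIV] by auto
    have sym: "transpose A = A" using assms(1) by (simp add: copositive_def)
    have "copositive (A - \<gamma> *\<^sub>R outer w w)"
      unfolding copositive_def using transpose_outer[OF sym] g(2) by (simp add: quad_outer)
    thus False using irr g(1) by (auto simp: irreducible_wrt_def)
  qed
next
  assume "\<exists>u. minimal_zero A u \<and> w \<bullet> u \<noteq> 0"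
  then obtain u where u: "minimal_zero A u" "w \<bullet> u \<noteq> 0" by blast
  show "irreducible_wrt A (outer w w)"
    unfolding irreducible_wrt_def
  proof
    assume "\<exists>\<gamma>>0. copositive (A - \<gamma> *\<^sub>R outer w w)"
    then obtain \<gamma> where g: "\<gamma> > 0" "copositive (A - \<gamma> *\<^sub>R outer w w)" by blast
    have uz: "nonneg_vec u" "u \<bullet> (A *v u) = 0" using u(1) by (auto simp: minimal_zero_def is_zero_def)
    have "0 \<le> u \<bullet> ((A - \<gamma> *\<^sub>R outer w w) *v u)" using g(2) uz(1) by (simp add: copositive_def)
    hence "0 \<le> - \<gamma> * (w \<bullet> u)^2" using uz(2) by (simp add: quad_outer)
    moreover have "(w \<bullet> u)^2 > 0" using u(2) by simp
    moreover have "\<gamma> * (w \<bullet> u)^2 > 0" using g(1) \<open>(w \<bullet> u)^2 > 0\<close> by (rule mult_pos_pos)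
    ultimately show False by linarith
  qed
qed

end
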